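(* Assume the standing hypotheses and let $p\in U_\delta(p_0)$, $\mu>0$. The following are equivalent: (i) $M(p)$ is an eigenvalue of $H_\mu(p)$ (and then the eigenfunctions are $f(q)=\frac{C\mu(p)\varphi(q)}{M(p)-w_p(q)}\in L^2(\mathbb{T}^3)$, $C\neq0$ constant); (ii) $\varphi(\mathbf{q}_0(p))=0$ and $\Delta(\mu,p;M(p))=0$; (iii) $\varphi(\mathbf{q}_0(p))=0$ and $\mu=\mu(p)$.
   Context: Let $\mathbb{T}^3=(\mathbb{R}/2\pi\mathbb{Z})^3$, identified with $(-\pi,\pi]^3$, with Lebesgue measure $ds$. Standing hypotheses: $\varphi:\mathbb{T}^3\to\mathbb{R}$ is real-analytic and not identically zero; $w:\mathbb{T}^3\times\mathbb{T}^3\to\mathbb{R}$ is real-analytic with a unique global maximum at $(p_0,q_0)$, which is non-degenerate (negative definite Hessian). Write $w_p(q)=w(p,q)$, $M(p)=\max_q w_p(q)$. For $\mu>0$, $p\in\mathbb{T}^3$, $H_\mu(p)$ is the operator on $L^2(\mathbb{T}^3)$ given by $(H_\mu(p)f)(q)=w_p(q)f(q)+\mu\,\varphi(q)\int_{\mathbb{T}^3}\varphi(t)f(t)\,dt$. Fix $\delta>0$ small enough that on the $\delta$-neighborhood $U_\delta(p_0)\subset\mathbb{T}^3$ of $p_0$ there is a real-analytic map $\mathbf{q}_0:U_\delta(p_0)\to\mathbb{T}^3$ such that, for every $p\in U_\delta(p_0)$, $\mathbf{q}_0(p)$ is the unique maximum point of $w_p$ and this maximum is non-degenerate (such $\delta$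 exists). For $p\in U_\delta(p_0)$, $\frac{1}{\mu(p)}=\int_{\mathbb{T}^3}\frac{\varphi^2(s)\,ds}{M(p)-w_p(s)}$ (finite and positive), and $\Delta(\mu,p;M(p)):=1-\mu\int_{\mathbb{T}^3}\frac{\varphi^2(s)\,ds}{M(p)-w_p(s)}=1-\mu/\mu(p)$. "$M(p)$ is an eigenvalue" means $H_\mu(p)f=M(p)f$ has a nonzero solution $f\in L^2(\mathbb{T}^3)$. *)

theory Defs
  imports "HOL-Analysis.Analysis"
begin

text \<open>Points of the torus T^3 = (R/2 pi Z)^3 are represented by vectors in R^3;
  functions on T^3 are 2 pi-periodic functions in each coordinate.\<close>

definition torus_eq :: "real^3 \<Rightarrow> real^3 \<Rightarrow> bool" where
  "torus_eq x y \<longleftrightarrow> (\<forall>i. \<exists>k::int. x $ i - y $ i = 2 * pi * of_int k)"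

definition T3_periodic :: "(real^3 \<Rightarrow> 'b) \<Rightarrow> bool" where
  "T3_periodic f \<longleftrightarrow> (\<forall>x y. torus_eq x y \<longrightarrow> f x = f y)"

definition T3_periodic2 :: "(real^3 \<Rightarrow> real^3 \<Rightarrow> 'b) \<Rightarrow> bool" where
  "T3_periodic2 w \<longleftrightarrow> (\<forall>p p' q q'. torus_eq p p' \<longrightarrow> torus_eq q q' \<longrightarrow> w p q = w p' q')"

text \<open>Fundamental domain (-pi,pi]^3 of the torus, with Lebesgue measure on it.\<close>
definition T3dom :: "(real^3) set" where
  "T3dom = {x. \<forall>i. - pi < x $ i \<and> x $ i \<le> pi}"

abbreviation T3meas :: "(real^3) measure" where
  "T3meas \<equiv> lebesgue_on T3dom"

definition multi_indices :: "('a::euclidean_space \<Rightarrow> nat) set" where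
  "multi_indices = {\<alpha>. \<forall>b. b \<notin> Basis \<longrightarrow> \<alpha> b = 0}"

definition real_analytic_on :: "('a::euclidean_space \<Rightarrow> real) \<Rightarrow> 'a set \<Rightarrow> bool" where
  "real_analytic_on f S \<longleftrightarrow>
     (\<forall>x\<in>S. \<exists>r>0. \<exists>c::('a \<Rightarrow> nat) \<Rightarrow> real. \<forall>y\<in>ball x r.
        ((\<lambda>\<alpha>. c \<alpha> * (\<Prod>b\<in>Basis. ((y - x) \<bullet> b) ^ \<alpha> b)) has_sum f y) multi_indices)"

definition neg_def_hessian_at :: "('a::real_inner \<Rightarrow> real) \<Rightarrow> 'a \<Rightarrow> bool" where
  "neg_def_hessian_at f q \<longleftrightarrow>
     (\<exists>g G. (\<forall>x. (f has_derivative (\<lambda>h. g x \<bullet> h)) (at x)) \<and>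
            (g has_derivative G) (at q) \<and> (\<forall>h. h \<noteq> 0 \<longrightarrow> G h \<bullet> h < 0))"

definition Mmax :: "(real^3 \<Rightarrow> real^3 \<Rightarrow> real) \<Rightarrow> real^3 \<Rightarrow> real" where
  "Mmax w p = (SUP q. w p q)"

definition L2_T3 :: "(real^3 \<Rightarrow> complex) set" where
  "L2_T3 = {f. f \<in> borel_measurable T3meas \<and> integrable T3meas (\<lambda>q. (cmod (f q))\<^sup>2)}"

definition Hop :: "real \<Rightarrow> (real^3 \<Rightarrow> real) \<Rightarrow> (real^3 \<Rightarrow> real^3 \<Rightarrow> real) \<Rightarrow> real^3
                   \<Rightarrow> (real^3 \<Rightarrow> complex) \<Rightarrow> real^3 \<Rightarrow> complex" where
  "Hop \<mu> \<phi> w p f q = of_real (w p q) * f q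
      + of_real (\<mu> * \<phi> q) * (\<integral>t. of_real (\<phi> t) * f t \<partial>T3meas)"

definition is_eigenfunction ::
  "real \<Rightarrow> (real^3 \<Rightarrow> real) \<Rightarrow> (real^3 \<Rightarrow> real^3 \<Rightarrow> real) \<Rightarrow> real^3 \<Rightarrow> real \<Rightarrow> (real^3 \<Rightarrow> complex) \<Rightarrow> bool" where
  "is_eigenfunction \<mu> \<phi> w p E f \<longleftrightarrow>
     f \<in> L2_T3 \<and> \<not> (AE q in T3meas. f q = 0) \<and>
     (AE q in T3meas. Hop \<mu> \<phi> w p f q = of_real E * f q)"

definition is_eigenvalue ::
  "real \<Rightarrow> (real^3 \<Rightarrow> real) \<Rightarrow> (real^3 \<Rightarrow> real^3 \<Rightarrow> real) \<Rightarrow> real^3 \<Rightarrow> real \<Rightarrow> bool" where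
  "is_eigenvalue \<mu> \<phi> w p E \<longleftrightarrow> (\<exists>f. is_eigenfunction \<mu> \<phi> w p E f)"

definition mu_crit :: "(real^3 \<Rightarrow> real) \<Rightarrow> (real^3 \<Rightarrow> real^3 \<Rightarrow> real) \<Rightarrow> real^3 \<Rightarrow> real" where
  "mu_crit \<phi> w p = 1 / (\<integral>s. (\<phi> s)\<^sup>2 / (Mmax w p - w p s) \<partial>T3meas)"

definition Delta :: "real \<Rightarrow> (real^3 \<Rightarrow> real) \<Rightarrow> (real^3 \<Rightarrow> real^3 \<Rightarrow> real) \<Rightarrow> real^3 \<Rightarrow> real" where
  "Delta \<mu> \<phi> w p = 1 - \<mu> * (\<integral>s. (\<phi> s)\<^sup>2 / (Mmax w p - w p s) \<partial>T3meas)"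

end

theory Submission
  imports Defs
begin


lemma analytic_local_lip:
  fixes \<phi> :: "'a::euclidean_space \<Rightarrow> real"
  assumes an: "real_analytic_on \<phi> UNIV"
  shows "\<exists>t>0. \<exists>K. \<forall>h. norm h \<le> t \<longrightarrow> \<bar>\<phi> (x + h) - \<phi> x\<bar> \<le> K * norm h"
proof -
  obtain r c where r: "r > 0" and hs: "\<And>y. y \<in> ball x r \<Longrightarrow>
      ((\<lambda>\<alpha>. c \<alpha> * (\<Prod>b\<in>Basis. ((y - x) \<bullet> b) ^ \<alpha> b)) has_sum \<phi> y) multi_indices"
    using an unfolding real_analytic_on_def by blast
  define F where "F y \<alpha> = c \<alpha> * (\<Prod>b\<in>Basis. ((y - x) \<bullet> b) ^ \<alpha> b)" for y \<alpha>
  define n where "n \<alpha> = (\<Sum>b\<in>Basis. \<alpha> b)" for \<alpha> :: "'a \<Rightarrow> nat"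
  define t where "t = r / (2 * DIM('a))"
  have tpos: "t > 0" using r by (simp add: t_def)
  define v :: 'a where "v = (\<Sum>b\<in>Basis. t *\<^sub>R b)"
  have vb: "v \<bullet> b = t" if "b \<in> Basis" for b
    using that by (simp add: v_def inner_sum_left inner_Basis if_distrib cong: if_cong)
  have "norm v \<le> (\<Sum>b\<in>(Basis::'a set). norm (t *\<^sub>R b))" unfolding v_def using norm_sum[of "\<lambda>b. t *\<^sub>R b" "Basis::'a set"] by simp
  also have "\<dots> = DIM('a) * t" using tpos by simp
  also have "\<dots> < r" using r unfolding t_def by (simp add: field_simps)
  finally have "x + v \<in> ball x r" by (simp add: dist_norm)
  from hs[OF this] have "(F (x + v)) summable_on multi_indices" unfolding F_def summable_on_def by blast
  moreover have "F (x + v) = (\<lambda>\<alpha>. c \<alpha> * t ^ n \<alpha>)"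
    unfolding F_def n_def using vb by (simp add: power_sum fun_eq_iff)
  ultimately have "(\<lambda>\<alpha>. c \<alpha> * t ^ n \<alpha>) summable_on multi_indices" by simp
  then have "(\<lambda>\<alpha>. norm (c \<alpha> * t ^ n \<alpha>)) summable_on multi_indices"
    by (rule summable_on_iff_abs_summable_on_real[THEN iffD1])
  then have Es: "(\<lambda>\<alpha>. \<bar>c \<alpha>\<bar> * t ^ n \<alpha>) summable_on multi_indices"
    using tpos by (simp add: abs_mult)
  define A where "A = infsum (\<lambda>\<alpha>. \<bar>c \<alpha>\<bar> * t ^ n \<alpha>) multi_indices"
  have "\<bar>\<phi> (x + h) - \<phi> x\<bar> \<le> (A / t) * norm h" if h: "norm h \<le> t" for h
  proof -
    have tr: "t < r"
    proof -
      have "0 < DIM('a)" by (rule DIM_positive)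
      then have "1 \<le> real DIM('a)" by linarith
      then have d2: "1 < real DIM('a) * 2" by linarith
      have "t = r / (real DIM('a) * 2)" unfolding t_def by (simp add: mult.commute)
      also have "\<dots> < r / 1" using r d2 by (intro divide_strict_left_mono) auto
      finally show ?thesis by simp
    qed
    have xb: "x \<in> ball x r" "x + h \<in> ball x r" using r h tr
      by (auto simp: dist_norm)
    define D where "D \<alpha> = F (x + h) \<alpha> - F x \<alpha>" for \<alpha>
    have Dsum: "(D has_sum (\<phi> (x + h) - \<phi> x)) multi_indices"
    proof -
      have m: "((\<lambda>\<alpha>. - F x \<alpha>) has_sum - \<phi> x) multi_indices"
        using has_sum_uminus[where f="F x" and a="- \<phi> x"] hs[OF xb(1)]
        unfolding F_def[abs_def] by simp
      show ?thesis using has_sum_add[OF hs[OF xb(2)] m] unfolding D_def[abs_def] F_def[abs_def] by simp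
    qed
    have Dbound: "\<bar>D \<alpha>\<bar> \<le> (norm h / t) * (\<bar>c \<alpha>\<bar> * t ^ n \<alpha>)" if \<alpha>: "\<alpha> \<in> multi_indices" for \<alpha>
    proof (cases "\<alpha> = (\<lambda>_. 0)")
      case True
      then show ?thesis using tpos by (simp add: D_def F_def)
    next
      case False
      then obtain b0 where b0: "\<alpha> b0 \<noteq> 0" by auto
      with \<alpha> have b0B: "b0 \<in> Basis" unfolding multi_indices_def by auto
      have Fx: "F x \<alpha> = 0" unfolding F_def using b0 b0B
        by (auto intro!: prod_zero)
      have n1: "n \<alpha> \<ge> 1"
      proof -
        have "\<alpha> b0 \<le> n \<alpha>" unfolding n_def using b0B by (intro member_le_sum) auto
        then show ?thesis using b0 by simp
      qed
      have "\<bar>F (x + h) \<alpha>\<bar> = \<bar>c \<alpha>\<bar> * (\<Prod>b\<in>Basis. \<bar>h \<bullet> b\<bar> ^ \<alpha> b)"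
        unfolding F_def by (simp add: abs_mult abs_prod power_abs)
      also have "\<dots> \<le> \<bar>c \<alpha>\<bar> * (\<Prod>b\<in>Basis. norm h ^ \<alpha> b)"
        by (intro mult_left_mono prod_mono power_mono conjI) (auto simp: Basis_le_norm)
      also have "\<dots> = \<bar>c \<alpha>\<bar> * norm h ^ n \<alpha>" unfolding n_def by (simp add: power_sum)
      also have "\<dots> \<le> \<bar>c \<alpha>\<bar> * ((norm h / t) * t ^ n \<alpha>)"
      proof (intro mult_left_mono)
        obtain m where m: "n \<alpha> = Suc m" using n1 not0_implies_Suc by fastforce
        have "norm h ^ m \<le> t ^ m" by (intro power_mono h) simp
        then have "norm h * norm h ^ m \<le> norm h * t ^ m" by (simp add: mult_left_mono)
        also have "\<dots> = (norm h / t) * (t * t ^ m)" using tpos by simp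
        finally show "norm h ^ n \<alpha> \<le> (norm h / t) * t ^ n \<alpha>" using m by simp
      qed simp
      finally show ?thesis unfolding D_def Fx by (simp add: algebra_simps)
    qed
    have Es': "(\<lambda>\<alpha>. (norm h / t) * (\<bar>c \<alpha>\<bar> * t ^ n \<alpha>)) summable_on multi_indices"
      using Es by (rule summable_on_cmult_right)
    have Dabs: "(\<lambda>\<alpha>. norm (D \<alpha>)) summable_on multi_indices"
      using summable_on_comparison_test[OF Es'] Dbound by simp
    have "norm (\<phi> (x + h) - \<phi> x) \<le> infsum (\<lambda>\<alpha>. norm (D \<alpha>)) multi_indices"
      using norm_has_sum_bound[OF _ Dsum] Dabs by (simp add: summable_iff_has_sum_infsum)
    also have "\<dots> \<le> infsum (\<lambda>\<alpha>. (norm h / t) * (\<bar>c \<alpha>\<bar> * t ^ n \<alpha>)) multi_indices"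
      using Dabs Es' Dbound by (intro infsum_mono) auto
    also have "\<dots> = (norm h / t) * A" unfolding A_def by (rule infsum_cmult_right') 
    finally show ?thesis by (simp add: mult.commute)
  qed
  then show ?thesis using tpos by blast
qed


lemma quad_bounds:
  fixes W :: "'a::euclidean_space \<Rightarrow> real" and g :: "'a \<Rightarrow> 'a"
  assumes Wd: "\<forall>x. (W has_derivative (\<lambda>h. g x \<bullet> h)) (at x)"
    and gd: "(g has_derivative G) (at a)"
    and negdef: "\<forall>h. h \<noteq> 0 \<longrightarrow> G h \<bullet> h < 0"
    and mx: "\<forall>q. W q \<le> W a"
  shows "\<exists>r>0. \<exists>c>0. \<exists>C>0. \<forall>h. norm h \<le> r \<longrightarrow>
           c * (norm h)^2 \<le> W a - W (a + h) \<and> W a - W (a + h) \<le> C * (norm h)^2"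
proof -
  have "(\<lambda>h. g a \<bullet> h) = (\<lambda>h. 0)"
    by (rule has_derivative_local_max[OF Wd[rule_format, of a]]) (use mx in auto)
  then have ga: "g a = 0" by (metis inner_eq_zero_iff)
  have blG: "bounded_linear G" using gd by (rule has_derivative_bounded_linear)
  have lG: "linear G" using blG bounded_linear.linear by blast
  obtain B where B: "B > 0" "\<And>h. norm (G h) \<le> norm h * B"
    using bounded_linear.pos_bounded blG by blast
  have "\<exists>x\<in>sphere (0::'a) 1. \<forall>y\<in>sphere 0 1. G y \<bullet> y \<le> G x \<bullet> x"
  proof (rule continuous_attains_sup)
    show "compact (sphere (0::'a) 1)" by simp
    obtain b :: 'a where "b \<in> Basis" using nonempty_Basis by blast
    then have "b \<in> sphere 0 1" by simp
    then show "sphere (0::'a) 1 \<noteq> {}" by blast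
    show "continuous_on (sphere 0 1) (\<lambda>y. G y \<bullet> y)"
      by (intro continuous_intros linear_continuous_on blG)
  qed
  then obtain x where x: "norm x = 1" "\<And>y. norm y = 1 \<Longrightarrow> G y \<bullet> y \<le> G x \<bullet> x" by auto
  define c where "c = - (G x \<bullet> x)"
  have cpos: "c > 0" using negdef x(1) unfolding c_def by (metis neg_0_less_iff_less norm_zero zero_neq_one)
  have Gh: "G h \<bullet> h \<le> - c * (norm h)^2" for h
  proof (cases "h = 0")
    case True then show ?thesis using blG by (simp add: linear_simps)
  next
    case False
    define u where "u = (1 / norm h) *\<^sub>R h"
    have "norm u = 1" using False by (simp add: u_def)
    then have "G u \<bullet> u \<le> - c" using x(2) unfolding c_def by simp
    moreover have "G h \<bullet> h = (norm h)^2 * (G u \<bullet> u)"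
      using False blG by (simp add: u_def linear_simps power2_eq_square linear_scale[OF lG])
    ultimately show ?thesis using False
      by (metis mult.commute mult_left_mono mult_minus_left zero_le_power2)
  qed
  obtain d where d: "d > 0" "\<And>y. norm (y - a) < d \<Longrightarrow> norm (g y - g a - G (y - a)) \<le> (c/2) * norm (y - a)"
    using gd cpos unfolding has_derivative_at_alt by (meson half_gt_zero)
  define r where "r = d / 2"
  have rpos: "r > 0" using d by (simp add: r_def)
  have main: "(c/4) * (norm h)^2 \<le> W a - W (a + h) \<and> W a - W (a + h) \<le> (B + c/2) * (norm h)^2"
    if h: "norm h \<le> r" for h
  proof -
    define \<psi> where "\<psi> t = W (a + t *\<^sub>R h)" for t
    have der: "(\<psi> has_real_derivative (g (a + t *\<^sub>R h) \<bullet> h)) (at t)" for t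
    proof -
      have l: "((\<lambda>t. a + t *\<^sub>R h) has_derivative (\<lambda>s. s *\<^sub>R h)) (at t)"
        by (intro derivative_eq_intros) auto
      have "((\<lambda>t. W (a + t *\<^sub>R h)) has_derivative (\<lambda>s. g (a + t *\<^sub>R h) \<bullet> (s *\<^sub>R h))) (at t)"
        using has_derivative_compose[OF l Wd[rule_format]] by (simp add: o_def)
      moreover have "(\<lambda>s. g (a + t *\<^sub>R h) \<bullet> (s *\<^sub>R h)) = (*) (g (a + t *\<^sub>R h) \<bullet> h)"
        by (simp add: fun_eq_iff)
      ultimately show ?thesis unfolding has_field_derivative_def \<psi>_def by simp
    qed
    have est: "g (a + t *\<^sub>R h) \<bullet> h \<le> -(c/2) * t * (norm h)^2 \<and>
               g (a + t *\<^sub>R h) \<bullet> h \<ge> -(B + c/2) * t * (norm h)^2" if t: "0 \<le> t" "t \<le> 1" for t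
    proof -
      have nt: "norm (t *\<^sub>R h) = t * norm h" using t by simp
      have "t * norm h \<le> norm h" using t by (simp add: mult_left_le_one_le)
      then have "norm (t *\<^sub>R h) < d" using nt h d(1) unfolding r_def by linarith
      then have e: "norm (g (a + t *\<^sub>R h) - G (t *\<^sub>R h)) \<le> (c/2) * (t * norm h)"
        using d(2)[of "a + t *\<^sub>R h"] ga nt t(1) by (simp add: abs_of_nonneg)
      have lin: "G (t *\<^sub>R h) \<bullet> h = t * (G h \<bullet> h)" using blG by (simp add: linear_scale[OF lG])
      have ce: "\<bar>(g (a + t *\<^sub>R h) - G (t *\<^sub>R h)) \<bullet> h\<bar> \<le> (c/2) * t * (norm h)^2"
      proof -
        have "norm (g (a + t *\<^sub>R h) - G (t *\<^sub>R h)) * norm h \<le> (c/2) * (t * norm h) * norm h"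
          by (rule mult_right_mono[OF e]) simp
        then show ?thesis
          using Cauchy_Schwarz_ineq2[of "g (a + t *\<^sub>R h) - G (t *\<^sub>R h)" h]
          by (simp add: power2_eq_square algebra_simps)
      qed
      have "g (a + t *\<^sub>R h) \<bullet> h = t * (G h \<bullet> h) + (g (a + t *\<^sub>R h) - G (t *\<^sub>R h)) \<bullet> h"
        using lin by (simp add: inner_diff_left)
      moreover have "t * (G h \<bullet> h) \<le> - c * t * (norm h)^2"
        using mult_left_mono[OF Gh[of h] t(1)] by (simp add: algebra_simps)
      moreover have "t * (G h \<bullet> h) \<ge> - B * t * (norm h)^2"
      proof -
        have "\<bar>G h \<bullet> h\<bar> \<le> B * (norm h)^2"
        proof -
          have "norm (G h) * norm h \<le> (norm h * B) * norm h"
            by (rule mult_right_mono[OF B(2)]) simp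
          then show ?thesis using Cauchy_Schwarz_ineq2[of "G h" h]
            by (simp add: power2_eq_square algebra_simps)
        qed
        then have "- (B * (norm h)^2) \<le> G h \<bullet> h" by linarith
        from mult_left_mono[OF this t(1)] show ?thesis by (simp add: algebra_simps)
      qed
      ultimately have "g (a + t *\<^sub>R h) \<bullet> h \<le> - c * (t * (norm h)^2) + (c/2) * (t * (norm h)^2)
          \<and> g (a + t *\<^sub>R h) \<bullet> h \<ge> - B * (t * (norm h)^2) - (c/2) * (t * (norm h)^2)"
        using ce unfolding abs_le_iff mult.assoc by linarith
      then show ?thesis by (simp add: algebra_simps)
    qed
    have lower: "\<psi> 1 + (c/4) * (norm h)^2 \<le> \<psi> 0"
    proof -
      define \<kappa> where "\<kappa> t = \<psi> t + (c/4) * t^2 * (norm h)^2" for t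
      have "\<kappa> 1 \<le> \<kappa> 0"
      proof (rule DERIV_nonpos_imp_nonincreasing[of 0 1 \<kappa>])
        fix t :: real assume t: "0 \<le> t" "t \<le> 1"
        have "(\<kappa> has_real_derivative (g (a + t *\<^sub>R h) \<bullet> h + (c/2) * t * (norm h)^2)) (at t)"
          unfolding \<kappa>_def[abs_def] by (rule derivative_eq_intros der refl | simp)+
        moreover have "g (a + t *\<^sub>R h) \<bullet> h + (c/2) * t * (norm h)^2 \<le> 0" using est[OF t] by simp
        ultimately show "\<exists>y. (\<kappa> has_real_derivative y) (at t) \<and> y \<le> 0" by blast
      qed simp
      then show ?thesis by (simp add: \<kappa>_def)
    qed
    have upper: "\<psi> 0 - \<psi> 1 \<le> (B + c/2) * (norm h)^2"
    proof -
      obtain z where z: "0 < z" "z < 1" "\<psi> 1 - \<psi> 0 = (1 - 0) * (g (a + z *\<^sub>R h) \<bullet> h)"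
        using MVT2[of 0 1 \<psi> "\<lambda>t. g (a + t *\<^sub>R h) \<bullet> h"] der by auto
      have "-(B + c/2) * z * (norm h)^2 \<ge> -(B + c/2) * (norm h)^2"
        using z B(1) cpos by (simp add: mult_left_le_one_le mult_le_cancel_right)
      then show ?thesis using est[of z] z by (simp add: algebra_simps)
    qed
    show ?thesis using lower upper by (simp add: \<psi>_def)
  qed
  show ?thesis
    apply (rule exI[of _ r], simp add: rpos)
    apply (rule exI[of _ "c/4"], simp add: cpos)
    apply (rule exI[of _ "B + c/2"])
    using main B(1) cpos by auto
qed


lemma torus_eq_refl: "torus_eq x x"
  unfolding torus_eq_def by (auto intro: exI[of _ 0])

lemma torus_eq_sym: "torus_eq x y \<Longrightarrow> torus_eq y x"
  unfolding torus_eq_def by (metis add.inverse_inverse minus_diff_eq mult_minus_right of_int_minus)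

lemma torus_eq_shift: "torus_eq x y \<Longrightarrow> torus_eq (x + h) (y + h)"
  unfolding torus_eq_def by simp

lemma periodicD: "T3_periodic f \<Longrightarrow> torus_eq x y \<Longrightarrow> f x = f y"
  unfolding T3_periodic_def by blast

lemma periodic2D: "T3_periodic2 w \<Longrightarrow> torus_eq q q' \<Longrightarrow> w p q = w p q'"
  unfolding T3_periodic2_def using torus_eq_refl by blast

lemma T3dom_rep: "\<exists>x'\<in>T3dom. torus_eq x' x"
proof -
  define k where "k i = \<lfloor>(pi - x $ i) / (2 * pi)\<rfloor>" for i
  define x' :: "real^3" where "x' = (\<chi> i. x $ i + 2 * pi * of_int (k i))"
  have "- pi < x' $ i \<and> x' $ i \<le> pi" for i
  proof -
    have f1: "of_int (k i) \<le> (pi - x $ i) / (2 * pi)" unfolding k_def by (rule of_int_floor_le)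
    have f2: "(pi - x $ i) / (2 * pi) < of_int (k i) + 1" unfolding k_def by (rule real_of_int_floor_add_one_gt)
    from f1 have "2 * pi * of_int (k i) \<le> pi - x $ i" using pi_gt_zero by (simp add: field_simps)
    moreover from f2 have "pi - x $ i < 2 * pi * of_int (k i) + 2 * pi" using pi_gt_zero by (simp add: field_simps)
    ultimately show ?thesis unfolding x'_def by simp
  qed
  then have "x' \<in> T3dom" unfolding T3dom_def by auto
  moreover have "torus_eq x' x" unfolding torus_eq_def x'_def by auto
  ultimately show ?thesis by blast
qed

lemma T3dom_uniq:
  assumes "x \<in> T3dom" "y \<in> T3dom" "torus_eq x y" shows "x = y"
proof -
  have "x $ i = y $ i" for i
  proof -
    obtain k :: int where k: "x $ i - y $ i = 2 * pi * of_int k" using assms(3) unfolding torus_eq_def by blast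
    have "- pi < x $ i" "x $ i \<le> pi" "- pi < y $ i" "y $ i \<le> pi"
      using assms(1,2) unfolding T3dom_def by auto
    then have "\<bar>x $ i - y $ i\<bar> < 2 * pi" by linarith
    then have "\<bar>of_int k\<bar> * (2 * pi) < 1 * (2 * pi)" using k pi_gt_zero by (simp add: abs_mult)
    then have "\<bar>of_int k :: real\<bar> < 1" using pi_gt_zero by (simp only: mult_less_cancel_right)
    then have "k = 0" by linarith
    then show ?thesis using k by simp
  qed
  then show ?thesis by (simp add: vec_eq_iff)
qed

lemma T3dom_borel: "T3dom \<in> sets borel"
proof -
  have "T3dom = (\<Inter>i. {x::real^3. - pi < x $ i} \<inter> {x. x $ i \<le> pi})" unfolding T3dom_def by auto
  also have "\<dots> \<in> sets borel"
    by (intro sets.finite_INT) (auto intro!: borel_open borel_closed open_Collect_less closed_Collect_le continuous_intros)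
  finally show ?thesis .
qed

lemma T3dom_lebesgue: "T3dom \<in> sets lebesgue"
  using T3dom_borel by (simp add: sets_completionI_sets)

lemma T3dom_coord: "x \<in> T3dom \<Longrightarrow> - pi < x $ i \<and> x $ i \<le> pi"
  unfolding T3dom_def by blast

lemma T3dom_sub_cbox: "T3dom \<subseteq> cbox (\<chi> i. - pi) (\<chi> i. pi)"
proof
  fix x :: "real^3" assume "x \<in> T3dom"
  then have "- pi \<le> x $ i \<and> x $ i \<le> pi" for i using T3dom_coord[of x i] by linarith
  then show "x \<in> cbox (\<chi> i. - pi) (\<chi> i. pi)" by (simp add: mem_box_cart)
qed

lemma T3dom_bounded: "bounded T3dom"
  using T3dom_sub_cbox bounded_cbox bounded_subset by blast

lemma T3dom_norm: "x \<in> T3dom \<Longrightarrow> norm x \<le> 3 * pi"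
proof -
  assume x: "x \<in> T3dom"
  have "norm x \<le> (\<Sum>i\<in>UNIV. \<bar>x $ i\<bar>)" by (rule norm_le_l1_cart)
  also have "\<dots> \<le> (\<Sum>i\<in>(UNIV::3 set). pi)" proof (intro sum_mono)
    fix i show "\<bar>x $ i\<bar> \<le> pi" using T3dom_coord[OF x, of i] by linarith
  qed
  also have "\<dots> = 3 * pi" by simp
  finally show ?thesis .
qed

lemma finite_measure_T3: "finite_measure T3meas"
proof -
  have "emeasure lebesgue T3dom \<le> emeasure lebesgue (cbox (\<chi> i. - pi) (\<chi> i. pi) :: (real^3) set)"
    by (intro emeasure_mono T3dom_sub_cbox) simp
  also have "emeasure lebesgue (cbox (\<chi> i. - pi) (\<chi> i. pi) :: (real^3) set) = emeasure lborel (cbox (\<chi> i. - pi) (\<chi> i. pi) :: (real^3) set)"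
    by (simp add: emeasure_completion)
  finally have "emeasure lebesgue T3dom < \<infinity>" using emeasure_lborel_cbox_finite by (metis order.strict_trans1) 
  then show ?thesis
    by (intro finite_measureI) (simp add: emeasure_restrict_space T3dom_lebesgue)
qed

lemma T3dom_cube:
  assumes x: "x \<in> T3dom" and e: "0 < e" "e \<le> pi"
  shows "\<exists>l. cbox l (l + (\<chi> i. e)) \<subseteq> T3dom \<and> (\<forall>y\<in>cbox l (l + (\<chi> i. e)). norm (y - x) \<le> 3 * e)
           \<and> x \<in> cbox l (l + (\<chi> i. e))
           \<and> emeasure lebesgue (cbox l (l + (\<chi> i. e))) = ennreal (e ^ 3)"
proof -
  define l :: "real^3" where "l = (\<chi> i. if x $ i > 0 then x $ i - e else x $ i)"
  let ?Q = "cbox l (l + (\<chi> i. e))"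
  have Q: "y \<in> ?Q \<longleftrightarrow> (\<forall>i. l $ i \<le> y $ i \<and> y $ i \<le> l $ i + e)" for y
    by (simp add: mem_box_cart)
  have sub: "?Q \<subseteq> T3dom"
  proof
    fix y assume "y \<in> ?Q"
    then have "l $ i \<le> y $ i \<and> y $ i \<le> l $ i + e" for i using Q by blast
    moreover have "- pi < x $ i \<and> x $ i \<le> pi" for i using x unfolding T3dom_def by blast
    ultimately have "- pi < y $ i \<and> y $ i \<le> pi" for i
    proof -
      have a: "l $ i \<le> y $ i" "y $ i \<le> l $ i + e" "- pi < x $ i" "x $ i \<le> pi"
        using \<open>\<And>i. l $ i \<le> y $ i \<and> y $ i \<le> l $ i + e\<close>[of i] \<open>\<And>i. - pi < x $ i \<and> x $ i \<le> pi\<close>[of i] by auto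
      show ?thesis
      proof (cases "x $ i > 0")
        case True then have "l $ i = x $ i - e" by (simp add: l_def)
        then show ?thesis using a e True by linarith
      next
        case False then have "l $ i = x $ i" by (simp add: l_def)
        then show ?thesis using a e False by linarith
      qed
    qed
    then show "y \<in> T3dom" unfolding T3dom_def by blast
  qed
  have near: "norm (y - x) \<le> 3 * e" if "y \<in> ?Q" for y
  proof -
    have "l $ i \<le> y $ i \<and> y $ i \<le> l $ i + e" for i using that Q by blast
    then have "\<bar>(y - x) $ i\<bar> \<le> e" for i
    proof -
      have a: "l $ i \<le> y $ i" "y $ i \<le> l $ i + e"
        using \<open>\<And>i. l $ i \<le> y $ i \<and> y $ i \<le> l $ i + e\<close>[of i] by auto
      show ?thesis
      proof (cases "x $ i > 0")
        case True then have "l $ i = x $ i - e" by (simp add: l_def)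
        then show ?thesis using a e True by (simp add: abs_le_iff)
      next
        case False then have "l $ i = x $ i" by (simp add: l_def)
        then show ?thesis using a e False by (simp add: abs_le_iff)
      qed
    qed
    then have "(\<Sum>i\<in>UNIV. \<bar>(y - x) $ i\<bar>) \<le> (\<Sum>i\<in>(UNIV::3 set). e)" by (intro sum_mono) auto
    then show ?thesis using norm_le_l1_cart[of "y - x"] by simp
  qed
  have xin: "x \<in> ?Q" unfolding Q
  proof
    fix i show "l $ i \<le> x $ i \<and> x $ i \<le> l $ i + e" using e by (simp add: l_def)
  qed
  have "emeasure lebesgue ?Q = emeasure lborel ?Q" by (simp add: emeasure_completion)
  also have "\<dots> = (\<Prod>b\<in>Basis. ((l + (\<chi> i. e)) - l) \<bullet> b)"
    using e by (intro emeasure_lborel_cbox) (auto simp: inner_add_left Basis_vec_def inner_axis)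
  also have "\<dots> = ennreal (e ^ 3)"
    proof -
    have "(\<Prod>b\<in>(Basis::(real^3) set). ((l + (\<chi> i. e)) - l) \<bullet> b) = (\<Prod>b\<in>(Basis::(real^3) set). e)"
      by (intro prod.cong) (auto simp: Basis_vec_def inner_axis)
    also have "\<dots> = e ^ 3" by simp
    finally show ?thesis by simp
  qed
  finally show ?thesis using sub near xin by blast
qed


lemma dyadic_exists:
  fixes y R :: real assumes "0 < y" "y \<le> R"
  shows "\<exists>m::nat. y \<le> R / 2 ^ m \<and> R / 2 ^ Suc m < y"
proof -
  obtain n :: nat where n: "R / y < 2 ^ n" using real_arch_pow[of 2 "R / y"] by auto
  define n0 where "n0 = (LEAST n::nat. R / y < 2 ^ n)"
  have n0: "R / y < 2 ^ n0" unfolding n0_def by (rule LeastI[of _ n]) (rule n)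
  have "R / y \<ge> 1" using assms by simp
  then have "n0 \<noteq> 0" using n0 by (metis not_less power_0)
  then obtain m where m: "n0 = Suc m" using not0_implies_Suc by blast
  have "\<not> R / y < 2 ^ m" using m unfolding n0_def
    by (metis Suc_n_not_le_n Least_le)
  then have "2 ^ m \<le> R / y" by simp
  then have "y \<le> R / 2 ^ m" using assms by (simp add: field_simps)
  moreover have "R / 2 ^ Suc m < y" using n0 m assms by (simp add: field_simps)
  ultimately show ?thesis by blast
qed

lemma cball_emeasure_le:
  fixes b :: "real^3" assumes "\<rho> \<ge> 0"
  shows "emeasure lborel (cball b \<rho>) \<le> ennreal ((2 * \<rho>) ^ 3)"
proof -
  have sub: "cball b \<rho> \<subseteq> cbox (b - (\<chi> i. \<rho>)) (b + (\<chi> i. \<rho>))"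
  proof
    fix y assume "y \<in> cball b \<rho>"
    then have "norm (y - b) \<le> \<rho>" by (simp add: dist_norm norm_minus_commute)
    then have "\<bar>(y - b) $ i\<bar> \<le> \<rho>" for i using component_le_norm_cart order_trans by blast
    then show "y \<in> cbox (b - (\<chi> i. \<rho>)) (b + (\<chi> i. \<rho>))"
      unfolding mem_box_cart
    proof (intro allI)
      fix i show "(b - (\<chi> i. \<rho>)) $ i \<le> y $ i \<and> y $ i \<le> (b + (\<chi> i. \<rho>)) $ i"
        using \<open>\<And>i. \<bar>(y - b) $ i\<bar> \<le> \<rho>\<close>[of i] by (simp add: abs_le_iff)
    qed
  qed
  have "emeasure lborel (cball b \<rho>) \<le> emeasure lborel (cbox (b - (\<chi> i. \<rho>)) (b + (\<chi> i. \<rho>)))"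
    by (intro emeasure_mono sub) simp
  also have "\<dots> = (\<Prod>c\<in>(Basis::(real^3) set). ((b + (\<chi> i. \<rho>)) - (b - (\<chi> i. \<rho>))) \<bullet> c)"
    using assms by (intro emeasure_lborel_cbox) (auto simp: Basis_vec_def inner_axis)
  also have "(\<Prod>c\<in>(Basis::(real^3) set). ((b + (\<chi> i. \<rho>)) - (b - (\<chi> i. \<rho>))) \<bullet> c) = (\<Prod>c\<in>(Basis::(real^3) set). 2 * \<rho>)"
    by (intro prod.cong) (auto simp: Basis_vec_def inner_axis)
  also have "\<dots> = (2 * \<rho>) ^ 3" by simp
  finally show ?thesis by simp
qed

lemma inv_sq_integrable:
  fixes b :: "real^3" assumes R: "R > 0"
  shows "integrable lborel (\<lambda>x. indicator (cball b R) x * (1 / (norm (x - b))^2) :: real)"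
proof (rule integrableI_bounded)
  show "(\<lambda>x. indicator (cball b R) x * (1 / (norm (x - b))^2) :: real) \<in> borel_measurable lborel"
  proof -
    have [measurable]: "cball b R \<in> sets borel" by (simp add: borel_closed)
    have [measurable]: "(\<lambda>x::real^3. norm (x - b)) \<in> borel_measurable borel"
      by (intro borel_measurable_continuous_onI continuous_intros)
    show ?thesis by measurable
  qed
  define \<rho> where "\<rho> m = R / 2 ^ m" for m :: nat
  define c where "c m = 4 ^ Suc m / R^2" for m :: nat
  have pw: "ennreal (norm (indicator (cball b R) x * (1 / (norm (x - b))^2) :: real))
        \<le> (\<Sum>m. ennreal (c m) * indicator (cball b (\<rho> m)) x)" for x
  proof (cases "x \<in> cball b R \<and> x \<noteq> b")
    case False
    then show ?thesis by (auto simp: indicator_def)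
  next
    case True
    define y where "y = norm (x - b)"
    have y: "0 < y" "y \<le> R" using True by (auto simp: y_def dist_norm norm_minus_commute)
    obtain m where m: "y \<le> R / 2 ^ m" "R / 2 ^ Suc m < y" using dyadic_exists[OF y] by blast
    have p4: "((2::real) ^ m)^2 = 4 ^ m" by (simp add: power2_eq_square power_mult_distrib[symmetric])
    have "(R / 2 ^ Suc m)^2 < y^2" using m(2) R by (intro power_strict_mono) auto
    then have "1 / y^2 < 1 / (R / 2 ^ Suc m)^2" using R y by (intro divide_strict_left_mono) auto
    also have "1 / (R / 2 ^ Suc m)^2 = c m" unfolding c_def using p4 by (simp add: power_divide power_mult_distrib)
    finally have lt: "1 / y^2 \<le> c m" by simp
    have xin: "x \<in> cball b (\<rho> m)" using m(1) unfolding \<rho>_def y_def by (simp add: dist_norm norm_minus_commute)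
    have "ennreal (norm (indicator (cball b R) x * (1 / (norm (x - b))^2) :: real)) = ennreal (1 / y^2)"
      using True by (simp add: y_def)
    also have "\<dots> \<le> ennreal (c m) * indicator (cball b (\<rho> m)) x" using lt xin by (simp add: ennreal_leI)
    also have "\<dots> \<le> (\<Sum>m. ennreal (c m) * indicator (cball b (\<rho> m)) x)"
    proof -
      define F where "F k = ennreal (c k) * indicator (cball b (\<rho> k)) x" for k
      have "sum F {m} \<le> suminf F" by (rule sum_le_suminf[OF summableI]) auto
      then show ?thesis unfolding F_def[symmetric] by simp
    qed
    finally show ?thesis .
  qed
  have "(\<integral>\<^sup>+x. ennreal (norm (indicator (cball b R) x * (1 / (norm (x - b))^2) :: real)) \<partial>lborel)
      \<le> (\<integral>\<^sup>+x. (\<Sum>m. ennreal (c m) * indicator (cball b (\<rho> m)) x) \<partial>lborel)"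
    by (intro nn_integral_mono pw)
  also have "\<dots> = (\<Sum>m. \<integral>\<^sup>+x. ennreal (c m) * indicator (cball b (\<rho> m)) x \<partial>lborel)"
  proof (intro nn_integral_suminf)
    fix m
    have [measurable]: "cball b (\<rho> m) \<in> sets borel" by (simp add: borel_closed)
    show "(\<lambda>x. ennreal (c m) * indicator (cball b (\<rho> m)) x) \<in> borel_measurable lborel" by measurable
  qed
  also have "\<dots> = (\<Sum>m. ennreal (c m) * emeasure lborel (cball b (\<rho> m)))"
    by (simp add: nn_integral_cmult_indicator)
  also have "\<dots> \<le> (\<Sum>m. ennreal (32 * R * (1/2)^m))"
  proof (intro suminf_le)
    fix m
    have p8: "((2::real)^m)^3 = 2^m * 4^m"
    proof -
      have "((2::real)^m)^3 = 2^m * (2^m * 2^m)" by (simp add: power3_eq_cube)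
      also have "2^m * 2^m = (4::real)^m" by (simp add: power_mult_distrib[symmetric])
      finally show ?thesis .
    qed
    have "ennreal (c m) * emeasure lborel (cball b (\<rho> m)) \<le> ennreal (c m) * ennreal ((2 * \<rho> m) ^ 3)"
      using R by (intro mult_left_mono cball_emeasure_le) (auto simp: \<rho>_def)
    also have "\<dots> = ennreal (c m * (2 * \<rho> m) ^ 3)" using R by (intro ennreal_mult[symmetric]) (auto simp: c_def \<rho>_def)
    also have "c m * (2 * \<rho> m) ^ 3 = 32 * R * (1/2)^m"
      using R p8 unfolding c_def \<rho>_def by (simp add: field_simps power_mult_distrib power_divide power2_eq_square power3_eq_cube)
    finally show "ennreal (c m) * emeasure lborel (cball b (\<rho> m)) \<le> ennreal (32 * R * (1/2)^m)" .
  qed auto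
  also have "\<dots> = ennreal (\<Sum>m. 32 * R * (1/2)^m)"
    using R by (intro suminf_ennreal2) (auto intro!: summable_mult summable_geometric)
  also have "\<dots> < \<infinity>" by simp
  finally show "(\<integral>\<^sup>+x. ennreal (norm (indicator (cball b R) x * (1 / (norm (x - b))^2) :: real)) \<partial>lborel) < \<infinity>" .
qed


lemma torus_eq_trans: "torus_eq x y \<Longrightarrow> torus_eq y z \<Longrightarrow> torus_eq x z"
proof -
  assume xy: "torus_eq x y" and yz: "torus_eq y z"
  show "torus_eq x z" unfolding torus_eq_def
  proof
    fix i
    obtain k1 :: int where k1: "x $ i - y $ i = 2 * pi * k1" using xy unfolding torus_eq_def by blast
    obtain k2 :: int where k2: "y $ i - z $ i = 2 * pi * k2" using yz unfolding torus_eq_def by blast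
    have "x $ i - z $ i = 2 * pi * of_int (k1 + k2)" using k1 k2 by (simp add: algebra_simps)
    then show "\<exists>k::int. x $ i - z $ i = 2 * pi * of_int k" by blast
  qed
qed

lemma singleton_null_lebesgue: "{c :: real^3} \<in> null_sets lebesgue"
  by (intro null_sets_completionI countable_imp_null_set_lborel) simp

lemma inv_sq_T3: "integrable T3meas (\<lambda>q. 1 / (norm (q - b))^2 :: real)"
proof -
  define R where "R = 3 * pi + norm b + 1"
  have R: "R > 0" unfolding R_def using pi_gt_zero by (smt (verit) norm_ge_zero)
  have [measurable]: "cball b R \<in> sets borel" by (simp add: borel_closed)
  have [measurable]: "(\<lambda>x::real^3. norm (x - b)) \<in> borel_measurable borel"
    by (intro borel_measurable_continuous_onI continuous_intros)
  have [measurable]: "T3dom \<in> sets borel" by (rule T3dom_borel)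
  have i1: "integrable lborel (\<lambda>x. indicator (cball b R) x * (1 / (norm (x - b))^2) :: real)"
    using inv_sq_integrable[OF R] .
  have i2: "integrable lebesgue (\<lambda>x. indicator (cball b R) x * (1 / (norm (x - b))^2) :: real)"
    using i1 by (subst integrable_completion) (measurable)
  have sub: "T3dom \<subseteq> cball b R"
  proof
    fix x assume x: "x \<in> T3dom"
    have "norm (x - b) \<le> norm x + norm b" by (rule norm_triangle_ineq4)
    also have "\<dots> < R" using T3dom_norm[OF x] unfolding R_def by simp
    finally show "x \<in> cball b R" by (simp add: dist_norm norm_minus_commute)
  qed
  have i3: "integrable lebesgue (\<lambda>x. indicator T3dom x *\<^sub>R (1 / (norm (x - b))^2) :: real)"
  proof (rule Bochner_Integration.integrable_bound[OF i2])
    show "(\<lambda>x. indicator T3dom x *\<^sub>R (1 / (norm (x - b))^2) :: real) \<in> borel_measurable lebesgue"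
      by (intro measurable_completion) measurable
    show "AE x in lebesgue. norm (indicator T3dom x *\<^sub>R (1 / (norm (x - b))^2) :: real)
        \<le> norm (indicator (cball b R) x * (1 / (norm (x - b))^2) :: real)"
      using sub by (intro AE_I2) (auto simp: indicator_def)
  qed
  show ?thesis using i3 by (subst integrable_restrict_space) (auto simp: T3dom_lebesgue)
qed

locale setting =
  fixes \<phi> W :: "real^3 \<Rightarrow> real" and a :: "real^3"
  assumes \<phi>c: "continuous_on UNIV \<phi>" and \<phi>per: "T3_periodic \<phi>" and \<phi>nz: "\<exists>x. \<phi> x \<noteq> 0"
    and Wc: "continuous_on UNIV W" and Wper: "T3_periodic W"
    and Wmax: "\<And>q. W q \<le> W a" and Wuniq: "\<And>q. W q = W a \<Longrightarrow> torus_eq q a"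
    and Wquad: "\<exists>r>0. \<exists>c>0. \<exists>C>0. \<forall>h. norm h \<le> r \<longrightarrow>
           c * (norm h)^2 \<le> W a - W (a + h) \<and> W a - W (a + h) \<le> C * (norm h)^2"
    and \<phi>lip: "\<exists>t>0. \<exists>K. \<forall>h. norm h \<le> t \<longrightarrow> \<bar>\<phi> (a + h) - \<phi> a\<bar> \<le> K * norm h"
begin

lemma \<phi>_meas[measurable]: "\<phi> \<in> borel_measurable T3meas"
  using \<phi>c by (intro continuous_imp_measurable_on_sets_lebesgue T3dom_lebesgue) (auto intro: continuous_on_subset)

lemma W_meas[measurable]: "W \<in> borel_measurable T3meas"
  using Wc by (intro continuous_imp_measurable_on_sets_lebesgue T3dom_lebesgue) (auto intro: continuous_on_subset)

lemma \<phi>_isCont: "isCont \<phi> x"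
  using \<phi>c by (simp add: continuous_on_eq_continuous_at)

lemma AE_W_lt: "AE q in T3meas. W q < W a"
proof -
  obtain a' where a': "a' \<in> T3dom" "torus_eq a' a" using T3dom_rep by blast
  have "AE x in lborel. x \<noteq> a'" by (rule AE_lborel_singleton)
  then have "AE x in lebesgue. x \<noteq> a'" by (rule AE_completion)
  then have "AE x in lebesgue. x \<in> T3dom \<longrightarrow> W x < W a"
  proof (rule eventually_mono)
    fix x assume xa: "x \<noteq> a'"
    show "x \<in> T3dom \<longrightarrow> W x < W a"
    proof
      assume x: "x \<in> T3dom"
      show "W x < W a"
      proof (rule ccontr)
        assume "\<not> W x < W a"
        then have "W x = W a" using Wmax[of x] by simp
        then have "torus_eq x a" by (rule Wuniq)
        then have "torus_eq x a'" using a'(2) torus_eq_sym torus_eq_trans by blast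
        then have "x = a'" using T3dom_uniq[OF x a'(1)] by blast
        with xa show False by simp
      qed
    qed
  qed
  then show ?thesis by (subst AE_restrict_space_iff) (auto simp: T3dom_lebesgue)
qed

lemma not_AE_\<phi>_zero: "\<not> (AE q in T3meas. \<phi> q = 0)"
proof
  assume ae: "AE q in T3meas. \<phi> q = 0"
  obtain x0 where x0: "\<phi> x0 \<noteq> 0" using \<phi>nz by blast
  obtain x' where x': "x' \<in> T3dom" "torus_eq x' x0" using T3dom_rep by blast
  have px': "\<phi> x' \<noteq> 0" using x0 periodicD[OF \<phi>per x'(2)] by simp
  obtain d where d: "d > 0" "\<And>y. dist y x' < d \<Longrightarrow> dist (\<phi> y) (\<phi> x') < \<bar>\<phi> x'\<bar>"
    using \<phi>_isCont[of x'] px' unfolding continuous_at_eps_delta by (metis zero_less_abs_iff)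
  define e where "e = min pi (d / 6)"
  have e: "0 < e" "e \<le> pi" using d pi_gt_zero by (auto simp: e_def)
  obtain l where l: "cbox l (l + (\<chi> i. e)) \<subseteq> T3dom" "\<forall>y\<in>cbox l (l + (\<chi> i. e)). norm (y - x') \<le> 3 * e"
     "emeasure lebesgue (cbox l (l + (\<chi> i. e))) = ennreal (e ^ 3)"
    using T3dom_cube[OF x'(1) e] by blast
  let ?Q = "cbox l (l + (\<chi> i. e))"
  have nz: "\<phi> y \<noteq> 0" if "y \<in> ?Q" for y
  proof -
    have "norm (y - x') \<le> 3 * e" using l(2) that by blast
    also have "\<dots> < d" using d by (simp add: e_def)
    finally have "dist (\<phi> y) (\<phi> x') < \<bar>\<phi> x'\<bar>" using d(2) by (simp add: dist_norm)
    then show ?thesis by (auto simp: dist_real_def)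
  qed
  have "AE x in lebesgue. x \<in> T3dom \<longrightarrow> \<phi> x = 0"
    using ae by (subst (asm) AE_restrict_space_iff) (auto simp: T3dom_lebesgue)
  then obtain N where N: "{x \<in> space lebesgue. \<not> (x \<in> T3dom \<longrightarrow> \<phi> x = 0)} \<subseteq> N" "emeasure lebesgue N = 0" "N \<in> sets lebesgue"
    by (rule AE_E)
  have "?Q \<subseteq> N" using N(1) l(1) nz by auto
  then have "emeasure lebesgue ?Q \<le> emeasure lebesgue N" by (intro emeasure_mono N(3))
  then have "ennreal (e ^ 3) \<le> 0" using l(3) N(2) by simp
  then show False using e by simp
qed

lemma G_meas[measurable]: "(\<lambda>q. (\<phi> q)^2 / (W a - W q)^2) \<in> borel_measurable T3meas"
  by measurable

lemma E1:
  assumes int: "integrable T3meas (\<lambda>q. (\<phi> q)^2 / (W a - W q)^2)"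
  shows "\<phi> a = 0"
proof (rule ccontr)
  assume pa: "\<phi> a \<noteq> 0"
  define G where "G q = (\<phi> q)^2 / (W a - W q)^2" for q
  obtain r c C where r: "r > 0" "c > 0" "C > 0" and quad: "\<And>h. norm h \<le> r \<Longrightarrow>
           c * (norm h)^2 \<le> W a - W (a + h) \<and> W a - W (a + h) \<le> C * (norm h)^2"
    using Wquad by blast
  have "\<bar>\<phi> a\<bar> / 2 > 0" using pa by simp
  then obtain d where d: "d > 0" "\<And>y. dist y a < d \<Longrightarrow> dist (\<phi> y) (\<phi> a) < \<bar>\<phi> a\<bar> / 2"
    using \<phi>_isCont[of a] unfolding continuous_at_eps_delta by blast
  obtain a' where a': "a' \<in> T3dom" "torus_eq a' a" using T3dom_rep by blast
  define \<rho>0 where "\<rho>0 = min (d / 2) r"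
  have \<rho>0: "\<rho>0 > 0" using d r by (simp add: \<rho>0_def)
  have lowG: "(\<phi> a)^2 / 4 / (C^2 * (norm (y - a'))^4) \<le> G y"
    if y: "norm (y - a') \<le> \<rho>0" "y \<noteq> a'" for y
  proof -
    define h where "h = y - a'"
    have hpos: "norm h > 0" using y by (simp add: h_def)
    have te: "torus_eq y (a + h)" using torus_eq_shift[OF a'(2), of h] by (simp add: h_def)
    have \<phi>y: "\<phi> y = \<phi> (a + h)" using periodicD[OF \<phi>per te] .
    have Wy: "W y = W (a + h)" using periodicD[OF Wper te] .
    have hr: "norm h \<le> r" using y(1) by (simp add: h_def \<rho>0_def)
    have hd: "norm h < d" using y(1) d(1) by (simp add: h_def \<rho>0_def)
    from quad[OF hr] have q1: "c * (norm h)^2 \<le> W a - W (a + h)" and q2: "W a - W (a + h) \<le> C * (norm h)^2"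
      by auto
    have Dpos: "0 < W a - W (a + h)" using q1 r(2) hpos by (smt (verit) mult_pos_pos zero_less_power)
    have D2: "(W a - W (a + h))^2 \<le> C^2 * (norm h)^4"
    proof -
      have "(W a - W (a + h))^2 \<le> (C * (norm h)^2)^2" using Dpos q2 by (intro power_mono) auto
      then show ?thesis by (simp add: power_mult_distrib power_mult[symmetric])
    qed
    have "dist (\<phi> (a + h)) (\<phi> a) < \<bar>\<phi> a\<bar> / 2" using d(2)[of "a + h"] hd by (simp add: dist_norm)
    then have "\<bar>\<phi> a\<bar> / 2 \<le> \<bar>\<phi> (a + h)\<bar>" unfolding dist_real_def by arith
    then have "(\<bar>\<phi> a\<bar> / 2)^2 \<le> \<bar>\<phi> (a + h)\<bar>^2" by (intro power_mono) auto
    then have num: "(\<phi> a)^2 / 4 \<le> (\<phi> (a + h))^2" by (simp add: power_divide)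
    have "(\<phi> a)^2 / 4 / (C^2 * (norm h)^4) \<le> (\<phi> (a + h))^2 / (W a - W (a + h))^2"
      using num D2 Dpos by (intro frac_le) auto
    then show ?thesis by (simp add: G_def \<phi>y Wy h_def)
  qed
  define T where "T = integral\<^sup>L T3meas G"
  define \<kappa> where "\<kappa> = (\<phi> a)^2 / 4 / (81 * C^2)"
  have \<kappa>: "\<kappa> > 0" using pa r by (simp add: \<kappa>_def)
  define e where "e = min (min pi (\<rho>0 / 3)) (\<kappa> / (2 * (\<bar>T\<bar> + 1)))"
  have e: "0 < e" "e \<le> pi" "3 * e \<le> \<rho>0" "e \<le> \<kappa> / (2 * (\<bar>T\<bar> + 1))"
    using \<rho>0 \<kappa> pi_gt_zero by (auto simp: e_def)
  obtain l where l: "cbox l (l + (\<chi> i. e)) \<subseteq> T3dom" "\<forall>y\<in>cbox l (l + (\<chi> i. e)). norm (y - a') \<le> 3 * e"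
     "emeasure lebesgue (cbox l (l + (\<chi> i. e))) = ennreal (e ^ 3)"
    using T3dom_cube[OF a'(1) e(1,2)] by blast
  define A where "A = cbox l (l + (\<chi> i. e)) - {a'}"
  have Al: "A \<in> sets lebesgue" unfolding A_def by (intro sets.Diff) (auto simp: sets_completionI_sets)
  have AT: "A \<subseteq> T3dom" using l(1) by (auto simp: A_def)
  have mA: "measure T3meas A = e ^ 3"
  proof -
    have "measure T3meas A = measure lebesgue A"
      using AT by (intro measure_restrict_space) (auto simp: T3dom_lebesgue)
    also have "\<dots> = measure lebesgue (cbox l (l + (\<chi> i. e)))"
      unfolding A_def by (intro measure_Diff_null_set singleton_null_lebesgue) (auto simp: sets_completionI_sets)
    also have "\<dots> = e ^ 3" using l(3) e(1) by (simp add: measure_def)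
    finally show ?thesis .
  qed
  have bnd: "\<kappa> / e ^ 4 * indicator A y \<le> G y" for y
  proof (cases "y \<in> A")
    case False then show ?thesis by (simp add: G_def)
  next
    case True
    then have y: "norm (y - a') \<le> 3 * e" "y \<noteq> a'" using l(2) by (auto simp: A_def)
    have "(norm (y - a'))^4 \<le> (3 * e)^4" using y(1) by (intro power_mono) auto
    then have "(norm (y - a'))^4 \<le> 81 * e^4" by (simp add: power_mult_distrib)
    then have "C^2 * (norm (y - a'))^4 \<le> C^2 * (81 * e^4)" by (intro mult_left_mono) auto
    moreover have "0 < C^2 * (norm (y - a'))^4" using y(2) r by simp
    ultimately have "(\<phi> a)^2 / 4 / (C^2 * (81 * e^4)) \<le> (\<phi> a)^2 / 4 / (C^2 * (norm (y - a'))^4)"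
      by (intro divide_left_mono) auto
    also have "\<dots> \<le> G y" using lowG y e(3) by simp
    finally show ?thesis using True by (simp add: \<kappa>_def field_simps)
  qed
  have "integral\<^sup>L T3meas (\<lambda>y. \<kappa> / e ^ 4 * indicator A y) \<le> T"
    unfolding T_def using int bnd by (intro integral_mono') (auto simp: G_def[abs_def])
  moreover have "integral\<^sup>L T3meas (\<lambda>y. \<kappa> / e ^ 4 * indicator A y) = \<kappa> / e"
  proof -
    have "integral\<^sup>L T3meas (\<lambda>y. \<kappa> / e ^ 4 * indicator A y) = \<kappa> / e ^ 4 * integral\<^sup>L T3meas (indicator A)"
      by (rule integral_mult_right_zero)
    also have "integral\<^sup>L T3meas (indicator A :: _ \<Rightarrow> real) = measure T3meas A"
      using AT by (simp add: Bochner_Integration.integral_indicator Int_absorb2)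
    finally show ?thesis using mA e(1) by (simp add: power_eq_if field_simps)
  qed
  ultimately have "\<kappa> / e \<le> T" by simp
  moreover have "2 * (\<bar>T\<bar> + 1) \<le> \<kappa> / e" using e \<kappa> by (simp add: field_simps)
  ultimately have "2 * (\<bar>T\<bar> + 1) \<le> T" by (rule order.trans[rotated])
  then show False by (cases "T \<ge> 0") auto
qed

lemma E2:
  assumes pa: "\<phi> a = 0"
  shows "integrable T3meas (\<lambda>q. (\<phi> q)^2 / (W a - W q)^2)"
proof -
  obtain r c C where r: "r > 0" "c > 0" "C > 0" and quad: "\<And>h. norm h \<le> r \<Longrightarrow>
           c * (norm h)^2 \<le> W a - W (a + h) \<and> W a - W (a + h) \<le> C * (norm h)^2"
    using Wquad by blast
  obtain t K where t: "t > 0" and lip: "\<And>h. norm h \<le> t \<Longrightarrow> \<bar>\<phi> (a + h) - \<phi> a\<bar> \<le> K * norm h"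
    using \<phi>lip by blast
  define r0 where "r0 = min r t"
  have r0: "r0 > 0" using r t by (simp add: r0_def)
  define N :: int where "N = \<lceil>norm a\<rceil> + 1"
  define Kset where "Kset = {k :: 3 \<Rightarrow> int. \<forall>i. k i \<in> {-N..N}}"
  define b where "b k = a + (\<chi> i. 2 * pi * of_int (k i))" for k :: "3 \<Rightarrow> int"
  have finK: "finite Kset"
  proof -
    have "Kset = Pi\<^sub>E UNIV (\<lambda>_. {-N..N})" unfolding Kset_def PiE_UNIV_domain Pi_def by auto
    then show ?thesis by (simp add: finite_PiE)
  qed
  have tb: "torus_eq q (a + (q - b k))" for q k
    unfolding torus_eq_def b_def by auto
  obtain m where m: "m > 0" "\<And>q. q \<in> T3dom \<Longrightarrow> (\<forall>k\<in>Kset. r0 \<le> norm (q - b k)) \<Longrightarrow> W q \<le> W a - m"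
  proof -
    define S where "S = cbox (\<chi> i. - pi) (\<chi> i. pi) \<inter> (\<Inter>k\<in>Kset. {q. r0 \<le> dist q (b k)})"
    have cS: "compact S" unfolding S_def
      by (intro compact_Int_closed compact_cbox closed_INT allI ballI closed_Collect_le continuous_intros) 
    show ?thesis
    proof (cases "S = {}")
      case True
      have "q \<notin> T3dom" if "\<forall>k\<in>Kset. r0 \<le> norm (q - b k)" for q
        using True that T3dom_sub_cbox unfolding S_def by (auto simp: dist_norm)
      then show ?thesis using that[of 1] by auto
    next
      case False
      have "continuous_on S W" using Wc by (rule continuous_on_subset) simp
      then obtain qs where qs: "qs \<in> S" "\<And>y. y \<in> S \<Longrightarrow> W y \<le> W qs"
        using continuous_attains_sup[OF cS False] by blast
      have "W qs < W a"
      proof (rule ccontr)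
        assume "\<not> W qs < W a"
        then have "torus_eq qs a" using Wmax[of qs] Wuniq by force
        then have "\<forall>i. \<exists>k::int. qs $ i - a $ i = 2 * pi * of_int k" unfolding torus_eq_def .
        then obtain k where k: "\<And>i. qs $ i - a $ i = 2 * pi * of_int (k i)" by metis
        have qsbox: "- pi \<le> qs $ i \<and> qs $ i \<le> pi" for i using qs(1) unfolding S_def by (auto simp: mem_box_cart)
        have "k \<in> Kset" unfolding Kset_def
        proof (intro CollectI allI)
          fix i
          have "\<bar>2 * pi * of_int (k i)\<bar> \<le> pi + norm a"
            using k[of i] qsbox[of i] component_le_norm_cart[of a i] by (simp add: abs_le_iff)
          also have "\<dots> \<le> 2 * pi * (1/2 + norm a)"
          proof -
            have "norm a \<le> 2 * pi * norm a" using pi_gt3 by (simp add: mult_le_cancel_right1)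
            then show ?thesis by (simp add: algebra_simps)
          qed
          finally have "2 * pi * \<bar>of_int (k i)\<bar> \<le> 2 * pi * (1/2 + norm a)" by (simp add: abs_mult)
          then have "\<bar>of_int (k i)\<bar> \<le> 1/2 + norm a" using pi_gt_zero by (simp add: mult_le_cancel_left_pos)
          moreover have "norm a \<le> of_int \<lceil>norm a\<rceil>" by (rule le_of_int_ceiling)
          ultimately have "\<bar>of_int (k i)\<bar> < of_int N + (1::real)" unfolding N_def of_int_add of_int_1 by linarith
          then have "\<bar>k i\<bar> \<le> N" by linarith
          then show "k i \<in> {-N..N}" by auto
        qed
        moreover have "qs = b k" unfolding b_def using k by (simp add: vec_eq_iff algebra_simps)
        ultimately show False using qs(1) r0 unfolding S_def by auto
      qed
      show ?thesis
      proof (rule that[of "W a - W qs"])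
        show "W a - W qs > 0" using \<open>W qs < W a\<close> by simp
        fix q assume q: "q \<in> T3dom" "\<forall>k\<in>Kset. r0 \<le> norm (q - b k)"
        then have "q \<in> S" using T3dom_sub_cbox unfolding S_def by (auto simp: dist_norm)
        then show "W q \<le> W a - (W a - W qs)" using qs(2) by simp
      qed
    qed
  qed
  obtain \<Phi> where \<Phi>: "\<And>q. q \<in> T3dom \<Longrightarrow> \<bar>\<phi> q\<bar> \<le> \<Phi>"
  proof -
    have "compact (\<phi> ` cbox (\<chi> i. - pi) (\<chi> i. pi))"
      by (intro compact_continuous_image continuous_on_subset[OF \<phi>c]) auto
    then obtain B where "\<forall>y\<in>\<phi> ` cbox (\<chi> i. - pi) (\<chi> i. pi). norm y \<le> B"
      using compact_imp_bounded bounded_iff by blast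
    then show ?thesis using that[of B] T3dom_sub_cbox by auto
  qed
  define G where "G q = (\<phi> q)^2 / (W a - W q)^2" for q
  define F where "F q = \<Phi>^2 / m^2 + (K^2 / c^2) * (\<Sum>k\<in>Kset. 1 / (norm (q - b k))^2)" for q
  have Fnn: "0 \<le> (K^2 / c^2) * (\<Sum>k\<in>Kset. 1 / (norm (q - b k))^2)" for q
    by (intro mult_nonneg_nonneg sum_nonneg) auto
  have GF: "G q \<le> F q" if q: "q \<in> T3dom" for q
  proof (cases "\<forall>k\<in>Kset. r0 \<le> norm (q - b k)")
    case True
    have "W q \<le> W a - m" using m(2)[OF q True] .
    then have D: "m^2 \<le> (W a - W q)^2" using m(1) by (intro power_mono) auto
    have "(\<phi> q)^2 \<le> \<Phi>^2" using \<Phi>[OF q] by (metis abs_ge_zero power2_abs power_mono)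
    then have "G q \<le> \<Phi>^2 / m^2" unfolding G_def using D m(1) by (intro frac_le) auto
    then show ?thesis unfolding F_def using Fnn[of q] by linarith
  next
    case False
    then obtain k where k: "k \<in> Kset" "norm (q - b k) < r0" by (auto simp: not_le)
    define h where "h = q - b k"
    have te: "torus_eq q (a + h)" using tb unfolding h_def .
    have \<phi>q: "\<phi> q = \<phi> (a + h)" using periodicD[OF \<phi>per te] .
    have Wq: "W q = W (a + h)" using periodicD[OF Wper te] .
    show ?thesis
    proof (cases "h = 0")
      case True
      then have "G q = 0" unfolding G_def using \<phi>q pa by simp
      then show ?thesis unfolding F_def using Fnn[of q] by (simp add: add_nonneg_nonneg)
    next
      case False
      have hpos: "norm h > 0" using False by simp
      have hr: "norm h \<le> r" "norm h \<le> t" using k(2) unfolding h_def r0_def by auto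
      from quad[OF hr(1)] have q1: "c * (norm h)^2 \<le> W a - W (a + h)" by auto
      have "c^2 * (norm h)^4 = (c * (norm h)^2)^2" by (simp add: power_mult_distrib power_mult[symmetric])
      also have "\<dots> \<le> (W a - W (a + h))^2" using q1 r(2) by (intro power_mono) auto
      finally have D: "c^2 * (norm h)^4 \<le> (W a - W (a + h))^2" .
      have "\<bar>\<phi> (a + h)\<bar> \<le> K * norm h" using lip[OF hr(2)] pa by simp
      then have N2: "(\<phi> (a + h))^2 \<le> K^2 * (norm h)^2"
        by (metis abs_ge_zero power2_abs power_mono power_mult_distrib)
      have "G q \<le> K^2 * (norm h)^2 / (c^2 * (norm h)^4)"
        unfolding G_def \<phi>q Wq using N2 D r(2) hpos by (intro frac_le) auto
      also have "\<dots> = (K^2 / c^2) * (1 / (norm h)^2)" using hpos by (simp add: field_simps power_eq_if)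
      also have "\<dots> \<le> (K^2 / c^2) * (\<Sum>k\<in>Kset. 1 / (norm (q - b k))^2)"
        unfolding h_def using finK k(1) by (intro mult_left_mono member_le_sum) auto
      also have "\<dots> \<le> F q" unfolding F_def by simp
      finally show ?thesis .
    qed
  qed
  have intF: "integrable T3meas F"
    unfolding F_def using finite_measure_T3
    by (intro Bochner_Integration.integrable_add Bochner_Integration.integrable_mult_right
        Bochner_Integration.integrable_sum inv_sq_T3 finite_measure.integrable_const)
  have "integrable T3meas G"
  proof (rule Bochner_Integration.integrable_bound[OF intF])
    show "G \<in> borel_measurable T3meas" unfolding G_def by measurable
    show "AE x in T3meas. norm (G x) \<le> norm (F x)"
    proof (rule AE_I2)
      fix x assume "x \<in> space T3meas"
      then have x: "x \<in> T3dom" by simp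
      have "0 \<le> G x" unfolding G_def by simp
      then show "norm (G x) \<le> norm (F x)" using GF[OF x] by simp
    qed
  qed
  then show ?thesis unfolding G_def[abs_def] .
qed

lemma fwd:
  fixes f :: "real^3 \<Rightarrow> complex"
  assumes mu: "\<mu> > 0" and fm: "f \<in> borel_measurable T3meas"
    and fL2: "integrable T3meas (\<lambda>q. (cmod (f q))^2)" and nz: "\<not> (AE q in T3meas. f q = 0)"
    and eq: "AE q in T3meas. of_real (W q) * f q + of_real (\<mu> * \<phi> q) * (\<integral>t. of_real (\<phi> t) * f t \<partial>T3meas)
               = of_real (W a) * f q"
  shows "\<phi> a = 0 \<and> \<mu> * (\<integral>s. (\<phi> s)^2 / (W a - W s) \<partial>T3meas) = 1 \<and>
         (\<exists>c. c \<noteq> 0 \<and> (AE q in T3meas. f q = c * of_real (\<mu> * \<phi> q / (W a - W q))))"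
proof -
  define c where "c = (\<integral>t. of_real (\<phi> t) * f t \<partial>T3meas)"
  have ae1: "AE q in T3meas. f q = c * of_real (\<mu> * \<phi> q / (W a - W q))"
    using eq AE_W_lt
  proof (eventually_elim)
    case (elim q)
    have "of_real (W a - W q) * f q = of_real (\<mu> * \<phi> q) * c"
      using elim(1) unfolding c_def by (simp add: algebra_simps)
    moreover have "(of_real (W a - W q) :: complex) \<noteq> 0" using elim(2) by simp
    ultimately show ?case by (simp add: field_simps)
  qed
  have c0: "c \<noteq> 0"
  proof
    assume "c = 0"
    then have "AE q in T3meas. f q = 0" using ae1 by simp
    with nz show False by simp
  qed
  have "integrable T3meas (\<lambda>q. (cmod c)^2 * \<mu>^2 * ((\<phi> q)^2 / (W a - W q)^2))"
  proof -
    have "AE q in T3meas. (cmod (f q))^2 = (cmod c)^2 * \<mu>^2 * ((\<phi> q)^2 / (W a - W q)^2)"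
      using ae1 by eventually_elim (simp only: norm_mult norm_of_real power_mult_distrib power2_abs power_divide, simp add: mult.assoc)
    then show ?thesis using fL2 by (subst integrable_cong_AE[symmetric]) (auto intro: fm)
  qed
  then have "integrable T3meas (\<lambda>q. (1 / ((cmod c)^2 * \<mu>^2)) * ((cmod c)^2 * \<mu>^2 * ((\<phi> q)^2 / (W a - W q)^2)))"
    by (rule Bochner_Integration.integrable_mult_right)
  moreover have "(\<lambda>q. (1 / ((cmod c)^2 * \<mu>^2)) * ((cmod c)^2 * \<mu>^2 * ((\<phi> q)^2 / (W a - W q)^2)))
      = (\<lambda>q. (\<phi> q)^2 / (W a - W q)^2)" using c0 mu by (simp add: fun_eq_iff)
  ultimately have "integrable T3meas (\<lambda>q. (\<phi> q)^2 / (W a - W q)^2)" by simp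
  then have pa: "\<phi> a = 0" by (rule E1)
  have "(\<integral>t. of_real (\<phi> t) * f t \<partial>T3meas) = (\<integral>t. c * of_real (\<mu> * ((\<phi> t)^2 / (W a - W t))) \<partial>T3meas)"
  proof (rule integral_cong_AE)
    show "(\<lambda>t. complex_of_real (\<phi> t) * f t) \<in> borel_measurable T3meas" using fm by measurable
    show "(\<lambda>t. c * complex_of_real (\<mu> * ((\<phi> t)^2 / (W a - W t)))) \<in> borel_measurable T3meas" by measurable
    show "AE t in T3meas. complex_of_real (\<phi> t) * f t = c * complex_of_real (\<mu> * ((\<phi> t)^2 / (W a - W t)))"
      using ae1 by eventually_elim (simp add: power2_eq_square)
  qed
  also have "\<dots> = c * of_real (\<mu> * (\<integral>s. (\<phi> s)^2 / (W a - W s) \<partial>T3meas))"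
    by (simp only: integral_mult_right_zero integral_complex_of_real)
  finally have "c = c * of_real (\<mu> * (\<integral>s. (\<phi> s)^2 / (W a - W s) \<partial>T3meas))"
    unfolding c_def .
  then have "c * 1 = c * of_real (\<mu> * (\<integral>s. (\<phi> s)^2 / (W a - W s) \<partial>T3meas))" by simp
  then have "(1::complex) = of_real (\<mu> * (\<integral>s. (\<phi> s)^2 / (W a - W s) \<partial>T3meas))"
    using c0 mult_left_cancel[OF c0] by metis
  then have mI: "\<mu> * (\<integral>s. (\<phi> s)^2 / (W a - W s) \<partial>T3meas) = 1"
    by (metis of_real_1 of_real_eq_iff)
  show ?thesis using pa mI c0 ae1 by blast
qed

lemma g0_meas[measurable]: "(\<lambda>q. complex_of_real (\<mu> * \<phi> q / (W a - W q))) \<in> borel_measurable T3meas"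
  by measurable

lemma g0_L2:
  assumes pa: "\<phi> a = 0"
  shows "integrable T3meas (\<lambda>q. (cmod (complex_of_real (\<mu> * \<phi> q / (W a - W q))))^2)"
proof -
  have "integrable T3meas (\<lambda>q. \<mu>^2 * ((\<phi> q)^2 / (W a - W q)^2))"
    using E2[OF pa] by (rule Bochner_Integration.integrable_mult_right)
  moreover have "(\<lambda>q. (cmod (complex_of_real (\<mu> * \<phi> q / (W a - W q))))^2) = (\<lambda>q. \<mu>^2 * ((\<phi> q)^2 / (W a - W q)^2))"
    by (simp only: norm_of_real power2_abs power_mult_distrib power_divide, simp add: mult.assoc)
  ultimately show ?thesis by simp
qed

lemma bwd:
  fixes f :: "real^3 \<Rightarrow> complex"
  assumes mu: "\<mu> > 0" and fm: "f \<in> borel_measurable T3meas"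
    and mI: "\<mu> * (\<integral>s. (\<phi> s)^2 / (W a - W s) \<partial>T3meas) = 1"
    and C: "C \<noteq> 0" and ae1: "AE q in T3meas. f q = C * of_real (\<mu> * \<phi> q / (W a - W q))"
  shows "\<not> (AE q in T3meas. f q = 0) \<and>
    (AE q in T3meas. of_real (W q) * f q + of_real (\<mu> * \<phi> q) * (\<integral>t. of_real (\<phi> t) * f t \<partial>T3meas)
               = of_real (W a) * f q)"
proof
  show "\<not> (AE q in T3meas. f q = 0)"
  proof
    assume "AE q in T3meas. f q = 0"
    then have "AE q in T3meas. \<phi> q = 0" using ae1 AE_W_lt
      by eventually_elim (use C mu in auto)
    with not_AE_\<phi>_zero show False by simp
  qed
  have int: "(\<integral>t. of_real (\<phi> t) * f t \<partial>T3meas) = C"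
  proof -
    have "(\<integral>t. of_real (\<phi> t) * f t \<partial>T3meas) = (\<integral>t. C * of_real (\<mu> * ((\<phi> t)^2 / (W a - W t))) \<partial>T3meas)"
    proof (rule integral_cong_AE)
      show "(\<lambda>t. complex_of_real (\<phi> t) * f t) \<in> borel_measurable T3meas" using fm by measurable
      show "(\<lambda>t. C * complex_of_real (\<mu> * ((\<phi> t)^2 / (W a - W t)))) \<in> borel_measurable T3meas" by measurable
      show "AE t in T3meas. complex_of_real (\<phi> t) * f t = C * complex_of_real (\<mu> * ((\<phi> t)^2 / (W a - W t)))"
        using ae1 by eventually_elim (simp add: power2_eq_square)
    qed
    also have "\<dots> = C * of_real (\<mu> * (\<integral>s. (\<phi> s)^2 / (W a - W s) \<partial>T3meas))"
    by (simp only: integral_mult_right_zero integral_complex_of_real)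
    finally show ?thesis using mI by simp
  qed
  show "AE q in T3meas. of_real (W q) * f q + of_real (\<mu> * \<phi> q) * (\<integral>t. of_real (\<phi> t) * f t \<partial>T3meas)
               = of_real (W a) * f q"
    using ae1 AE_W_lt
  proof eventually_elim
    case (elim q)
    have D: "(of_real (W a - W q) :: complex) \<noteq> 0" using elim(2) by simp
    have e2: "of_real (\<mu> * \<phi> q) * C = of_real (W a - W q) * f q"
      unfolding elim(1) using D by (simp add: field_simps)
    then show ?case unfolding int by (simp add: algebra_simps)
  qed
qed

end


lemma lip_cont:
  fixes f :: "'a::real_normed_vector \<Rightarrow> real"
  assumes "\<And>x. \<exists>t>0. \<exists>K. \<forall>h. norm h \<le> t \<longrightarrow> \<bar>f (x + h) - f x\<bar> \<le> K * norm h"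
  shows "continuous_on UNIV f"
proof (rule continuous_at_imp_continuous_on, intro ballI)
  fix x :: 'a
  obtain t K where t: "t > 0" and b: "\<And>h. norm h \<le> t \<Longrightarrow> \<bar>f (x + h) - f x\<bar> \<le> K * norm h"
    using assms by blast
  show "isCont f x" unfolding continuous_at_eps_delta
  proof (intro allI impI)
    fix e :: real assume e: "e > 0"
    define d where "d = min t (e / (\<bar>K\<bar> + 1))"
    have d: "d > 0" using t e by (simp add: d_def)
    have "dist (f y) (f x) < e" if y: "dist y x < d" for y
    proof -
      define h where "h = y - x"
      have nh: "norm h < d" using y by (simp add: h_def dist_norm)
      then have "norm h \<le> t" by (simp add: d_def)
      then have "\<bar>f y - f x\<bar> \<le> K * norm h" using b[of h] by (simp add: h_def)
      also have "\<dots> \<le> \<bar>K\<bar> * norm h" by (simp add: mult_right_mono)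
      also have "\<dots> \<le> \<bar>K\<bar> * (e / (\<bar>K\<bar> + 1))" using nh by (intro mult_left_mono) (auto simp: d_def)
      also have "\<dots> < e" using e by (simp add: field_simps)
      finally show ?thesis by (simp add: dist_real_def)
    qed
    then show "\<exists>d>0. \<forall>y. dist y x < d \<longrightarrow> dist (f y) (f x) < e" using d by blast
  qed
qed

theorem lemma2p5:
  fixes \<phi> :: "real^3 \<Rightarrow> real" and w :: "real^3 \<Rightarrow> real^3 \<Rightarrow> real"
    and p0 q0 :: "real^3" and \<delta> :: real and q0map :: "real^3 \<Rightarrow> real^3"
    and p :: "real^3" and \<mu> :: real
  assumes phi_per: "T3_periodic \<phi>"
    and phi_an: "real_analytic_on \<phi> UNIV"
    and phi_nz: "\<exists>x. \<phi> x \<noteq> 0"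
    and w_per: "T3_periodic2 w"
    and w_an: "real_analytic_on (\<lambda>z. w (fst z) (snd z)) UNIV"
    and w_max: "\<forall>p q. w p q \<le> w p0 q0"
    and w_max_unique: "\<forall>p q. w p q = w p0 q0 \<longrightarrow> torus_eq p p0 \<and> torus_eq q q0"
    and w_max_nondeg: "neg_def_hessian_at (\<lambda>z. w (fst z) (snd z)) (p0, q0)"
    and delta_pos: "\<delta> > 0"
    and q0_an: "\<forall>i. real_analytic_on (\<lambda>x. q0map x $ i) (ball p0 \<delta>)"
    and q0_max: "\<forall>p'\<in>ball p0 \<delta>. \<forall>q. w p' q \<le> w p' (q0map p')"
    and q0_unique: "\<forall>p'\<in>ball p0 \<delta>. \<forall>q. w p' q = w p' (q0map p') \<longrightarrow> torus_eq q (q0map p')"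
    and q0_nondeg: "\<forall>p'\<in>ball p0 \<delta>. neg_def_hessian_at (w p') (q0map p')"
    and p_in: "p \<in> ball p0 \<delta>"
    and mu_pos: "\<mu> > 0"
  shows "(is_eigenvalue \<mu> \<phi> w p (Mmax w p) \<longleftrightarrow>
            \<phi> (q0map p) = 0 \<and> Delta \<mu> \<phi> w p = 0)
       \<and> (\<phi> (q0map p) = 0 \<and> Delta \<mu> \<phi> w p = 0 \<longleftrightarrow>
            \<phi> (q0map p) = 0 \<and> \<mu> = mu_crit \<phi> w p)
       \<and> (is_eigenvalue \<mu> \<phi> w p (Mmax w p) \<longrightarrow>
            (\<lambda>q. of_real (mu_crit \<phi> w p * \<phi> q / (Mmax w p - w p q))) \<in> L2_T3 \<and>
            (\<forall>f. is_eigenfunction \<mu> \<phi> w p (Mmax w p) f \<longleftrightarrow>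
               f \<in> L2_T3 \<and> (\<exists>C::complex. C \<noteq> 0 \<and>
                 (AE q in T3meas. f q = C * of_real (mu_crit \<phi> w p * \<phi> q / (Mmax w p - w p q))))))"
proof -
  define a where "a = q0map p"
  obtain g G where Wd: "\<forall>x. (w p has_derivative (\<lambda>h. g x \<bullet> h)) (at x)"
      and gd: "(g has_derivative G) (at a)" and nd: "\<forall>h. h \<noteq> 0 \<longrightarrow> G h \<bullet> h < 0"
    using q0_nondeg p_in unfolding neg_def_hessian_at_def a_def by blast
  have Wmax: "\<And>q. w p q \<le> w p a" using q0_max p_in unfolding a_def by blast
  have Wuniq: "\<And>q. w p q = w p a \<Longrightarrow> torus_eq q a" using q0_unique p_in unfolding a_def by blast
  have Wc: "continuous_on UNIV (w p)"
    using Wd by (intro continuous_at_imp_continuous_on) (blast intro: has_derivative_continuous)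
  have Wper: "T3_periodic (w p)" unfolding T3_periodic_def using periodic2D[OF w_per] by blast
  have Wquad: "\<exists>r>0. \<exists>c>0. \<exists>C>0. \<forall>h. norm h \<le> r \<longrightarrow>
           c * (norm h)^2 \<le> w p a - w p (a + h) \<and> w p a - w p (a + h) \<le> C * (norm h)^2"
    using quad_bounds[OF Wd gd nd] Wmax by blast
  have \<phi>c: "continuous_on UNIV \<phi>"
    by (rule lip_cont) (rule analytic_local_lip[OF phi_an])
  interpret setting \<phi> "w p" a
    using \<phi>c phi_per phi_nz Wc Wper Wmax Wuniq Wquad analytic_local_lip[OF phi_an, of a]
    by unfold_locales auto
  have Mm: "Mmax w p = w p a" unfolding Mmax_def
    by (rule cSup_eq_maximum) (auto intro: Wmax)
  define I where "I = (\<integral>s. (\<phi> s)^2 / (w p a - w p s) \<partial>T3meas)"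
  have Delta_eq: "Delta \<mu> \<phi> w p = 1 - \<mu> * I" unfolding Delta_def Mm I_def ..
  have mu_eq: "mu_crit \<phi> w p = 1 / I" unfolding mu_crit_def Mm I_def ..
  define g0 where "g0 q = complex_of_real (\<mu> * \<phi> q / (w p a - w p q))" for q
  have key1: "is_eigenfunction \<mu> \<phi> w p (Mmax w p) f \<longleftrightarrow>
      (f \<in> L2_T3 \<and> \<phi> a = 0 \<and> \<mu> * I = 1 \<and> (\<exists>C. C \<noteq> 0 \<and> (AE q in T3meas. f q = C * g0 q)))" for f
  proof
    assume ef: "is_eigenfunction \<mu> \<phi> w p (Mmax w p) f"
    then have fL: "f \<in> L2_T3" and nz: "\<not> (AE q in T3meas. f q = 0)"
      and eq: "AE q in T3meas. of_real (w p q) * f q + of_real (\<mu> * \<phi> q) * (\<integral>t. of_real (\<phi> t) * f t \<partial>T3meas)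
               = of_real (w p a) * f q"
      unfolding is_eigenfunction_def Hop_def Mm by auto
    from fL have fm: "f \<in> borel_measurable T3meas" and fL2: "integrable T3meas (\<lambda>q. (cmod (f q))^2)"
      unfolding L2_T3_def by auto
    from fwd[OF mu_pos fm fL2 nz eq] show "f \<in> L2_T3 \<and> \<phi> a = 0 \<and> \<mu> * I = 1 \<and> (\<exists>C. C \<noteq> 0 \<and> (AE q in T3meas. f q = C * g0 q))"
      using fL unfolding I_def g0_def by blast
  next
    assume r: "f \<in> L2_T3 \<and> \<phi> a = 0 \<and> \<mu> * I = 1 \<and> (\<exists>C. C \<noteq> 0 \<and> (AE q in T3meas. f q = C * g0 q))"
    then obtain C where C: "C \<noteq> 0" "AE q in T3meas. f q = C * g0 q" by blast
    from r have fm: "f \<in> borel_measurable T3meas" unfolding L2_T3_def by auto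
    from r have mI: "\<mu> * (\<integral>s. (\<phi> s)^2 / (w p a - w p s) \<partial>T3meas) = 1" unfolding I_def by blast
    from bwd[OF mu_pos fm mI C(1)] C(2) r show "is_eigenfunction \<mu> \<phi> w p (Mmax w p) f"
      unfolding is_eigenfunction_def Hop_def Mm g0_def by auto
  qed
  have key2: "g0 \<in> L2_T3" if "\<phi> a = 0"
    unfolding L2_T3_def g0_def using g0_L2[OF that] by auto
  have ev: "is_eigenvalue \<mu> \<phi> w p (Mmax w p) \<longleftrightarrow> \<phi> a = 0 \<and> \<mu> * I = 1"
  proof
    assume "is_eigenvalue \<mu> \<phi> w p (Mmax w p)"
    then obtain f where "is_eigenfunction \<mu> \<phi> w p (Mmax w p) f" unfolding is_eigenvalue_def by blast
    then show "\<phi> a = 0 \<and> \<mu> * I = 1" using key1 by blast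
  next
    assume h: "\<phi> a = 0 \<and> \<mu> * I = 1"
    have "is_eigenfunction \<mu> \<phi> w p (Mmax w p) g0"
      using key1[of g0] key2 h by (auto intro!: exI[of _ 1])
    then show "is_eigenvalue \<mu> \<phi> w p (Mmax w p)" unfolding is_eigenvalue_def by blast
  qed
  have c2: "(1 - \<mu> * I = 0) \<longleftrightarrow> \<mu> = 1 / I"
  proof
    assume "1 - \<mu> * I = 0"
    then have "\<mu> * I = 1" by simp
    then show "\<mu> = 1 / I" by (metis mult_eq_0_iff nonzero_eq_divide_eq one_neq_zero)
  next
    assume h: "\<mu> = 1 / I"
    then have "I \<noteq> 0" using mu_pos by auto
    then show "1 - \<mu> * I = 0" using h by simp
  qed
  have c3fun: "mu_crit \<phi> w p = \<mu>" if "\<mu> * I = 1"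
    using c2 that mu_eq by simp
  show ?thesis
  proof (intro conjI impI)
    show "is_eigenvalue \<mu> \<phi> w p (Mmax w p) = (\<phi> (q0map p) = 0 \<and> Delta \<mu> \<phi> w p = 0)"
      unfolding ev Delta_eq a_def[symmetric] by auto
    show "(\<phi> (q0map p) = 0 \<and> Delta \<mu> \<phi> w p = 0) = (\<phi> (q0map p) = 0 \<and> \<mu> = mu_crit \<phi> w p)"
      unfolding Delta_eq mu_eq c2 ..
  next
    assume e: "is_eigenvalue \<mu> \<phi> w p (Mmax w p)"
    then have pa: "\<phi> a = 0" and mI: "\<mu> * I = 1" using ev by auto
    have gf: "(\<lambda>q. complex_of_real (mu_crit \<phi> w p * \<phi> q / (Mmax w p - w p q))) = g0"
      unfolding c3fun[OF mI] Mm g0_def by simp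
    show "(\<lambda>q. complex_of_real (mu_crit \<phi> w p * \<phi> q / (Mmax w p - w p q))) \<in> L2_T3"
      unfolding gf using key2[OF pa] .
    show "\<forall>f. is_eigenfunction \<mu> \<phi> w p (Mmax w p) f =
        (f \<in> L2_T3 \<and> (\<exists>C. C \<noteq> 0 \<and> (AE q in T3meas. f q = C * complex_of_real (mu_crit \<phi> w p * \<phi> q / (Mmax w p - w p q)))))"
      using key1 pa mI unfolding gf[symmetric] by simp
  qed
qed


end
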